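(* Let $G=(V,E)$ be an acyclic finite directed graph, $\Gamma\subset V$ containing all sinks and sources with $V\setminus\Gamma\ne\emptyset$, and let $z=(z_v)_{v\in\Gamma}$ with each $z_v$ a positive multiple of $I_d$. Then $\Phi_d$ restricted to $\mathcal P_d^V(z)$ has a unique global minimiser $m$, at which the Hessian (with respect to the independent real entries of $x_v$, $v\in V\setminus\Gamma$) is positive definite; moreover every $m_v$ is a positive multiple of $I_d$.
   Context: $v\to w$ denotes an edge; sinks have no outgoing edges, sources no incoming edges. $\mathcal P_d$: $d\times d$ real symmetric positive definite matrices. $\mathcal P_d^V(z)=\{x=(x_v)_{v\in V}\in\mathcal P_d^V:x_v=z_v\ \forall v\in\Gamma\}$. $\Phi_d(x)=\sum_{v\to w}\operatorname{tr}[x_vx_w^{-1}]$. *)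

theory Defs
  imports "HOL-Analysis.Analysis"
begin

text \<open>Symmetric positive definite real d x d matrices (d = CARD('n)).\<close>
definition spd :: "real^'n^'n \<Rightarrow> bool" where
  "spd A \<longleftrightarrow> transpose A = A \<and> (\<forall>x. x \<noteq> 0 \<longrightarrow> x \<bullet> (A *v x) > 0)"

definition symm :: "real^'n^'n \<Rightarrow> bool" where
  "symm A \<longleftrightarrow> transpose A = A"

text \<open>Finite directed graph (V,E) with E a set of ordered pairs (v,w), meaning v -> w.\<close>
definition sinks :: "'v set \<Rightarrow> ('v \<times> 'v) set \<Rightarrow> 'v set" where
  "sinks V E = {v \<in> V. \<not> (\<exists>w. (v, w) \<in> E)}"

definition sources :: "'v set \<Rightarrow> ('v \<times> 'v) set \<Rightarrow> 'v set" where
  "sources V E = {v \<in> V. \<not> (\<exists>u. (u, v) \<in> E)}"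

definition Phi :: "('v \<times> 'v) set \<Rightarrow> ('v \<Rightarrow> real^'n^'n) \<Rightarrow> real" where
  "Phi E x = (\<Sum>(v, w)\<in>E. trace (x v ** matrix_inv (x w)))"

text \<open>P_d^V(z): families of SPD matrices indexed by V agreeing with z on Gamma
  (values outside V are irrelevant and fixed to 0).\<close>
definition PdV :: "'v set \<Rightarrow> 'v set \<Rightarrow> ('v \<Rightarrow> real^'n^'n) \<Rightarrow> ('v \<Rightarrow> real^'n^'n) set" where
  "PdV V \<Gamma> z = {x. (\<forall>v\<in>V. spd (x v)) \<and> (\<forall>v\<in>\<Gamma>. x v = z v) \<and> (\<forall>v. v \<notin> V \<longrightarrow> x v = 0)}"

text \<open>q is the second derivative at t = 0 of t \<mapsto> f(m + t H), i.e. the value of the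
  Hessian quadratic form of f at m in direction H.\<close>
definition second_dir_deriv ::
  "(('v \<Rightarrow> real^'n^'n) \<Rightarrow> real) \<Rightarrow> ('v \<Rightarrow> real^'n^'n) \<Rightarrow> ('v \<Rightarrow> real^'n^'n) \<Rightarrow> real \<Rightarrow> bool" where
  "second_dir_deriv f m H q \<longleftrightarrow>
     (\<forall>\<^sub>F t in nhds 0. (\<lambda>s. f (\<lambda>v. m v + s *\<^sub>R H v)) differentiable (at t)) \<and>
     ((\<lambda>t. deriv (\<lambda>s. f (\<lambda>v. m v + s *\<^sub>R H v)) t) has_real_derivative q) (at 0)"

end

theory Submission
  imports Defs
begin

definition dmat :: "real^'n \<Rightarrow> real^'n^'n" where
  "dmat a = (\<chi> i j. if i = j then a$i else 0)"

lemma dmat_nth[simp]: "dmat a $ i $ j = (if i = j then a$i else 0)"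
  by (simp add: dmat_def)

lemma transpose_dmat[simp]: "transpose (dmat a) = dmat a"
  by (simp add: vec_eq_iff transpose_def)

lemma sum_delta_r: "(\<Sum>k\<in>(UNIV::'n::finite set). f k * (if k = j then g k else 0)) = f j * (g j::real)"
proof -
  have "(\<lambda>k. f k * (if k = j then g k else 0)) = (\<lambda>k. if k = j then f k * g k else 0)" by auto
  then show ?thesis by (simp only:) simp
qed

lemma sum_delta_l: "(\<Sum>k\<in>(UNIV::'n::finite set). (if j = k then g k else 0) * f k) = g j * (f j::real)"
proof -
  have "(\<lambda>k. (if j = k then g k else 0) * f k) = (\<lambda>k. if k = j then g k * f k else 0)" by auto
  then show ?thesis by (simp only:) simp
qed

lemma mul_dmat_nth[simp]: "(A ** dmat a) $ i $ j = A$i$j * a$j"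
  by (simp add: matrix_matrix_mult_def sum_delta_r)

lemma dmat_mul_nth[simp]: "(dmat a ** A) $ i $ j = a$i * A$i$j"
  by (simp add: matrix_matrix_mult_def sum_delta_l)

lemma dmat_mul: "dmat a ** dmat b = dmat (\<chi> i. a$i * b$i)"
  by (simp add: vec_eq_iff)

lemma trace_dmat: "trace (dmat a) = (\<Sum>i\<in>UNIV. a$i)"
  by (simp add: trace_def)

lemma det_dmat: "det (dmat a) = (\<Prod>i\<in>UNIV. a$i)"
  by (subst det_diagonal) auto

lemma dmat_const: "dmat (\<chi> i. c) = c *\<^sub>R mat 1"
  by (simp add: vec_eq_iff mat_def)
lemma sym_inner:
  fixes A :: "real^'n^'n"
  assumes "transpose A = A"
  shows "x \<bullet> (A *v y) = (A *v x) \<bullet> y"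
proof -
  have "x \<bullet> (A *v y) = (x v* A) \<bullet> y" by (simp add: dot_lmul_matrix)
  also have "x v* A = transpose A *v x" by simp
  finally show ?thesis using assms by simp
qed

lemma eigvec_exists:
  fixes A :: "real^'n^'n"
  assumes sym: "transpose A = A" and S: "subspace S" and inv: "\<forall>x\<in>S. A *v x \<in> S"
    and ne: "S \<noteq> {0}"
  shows "\<exists>u\<in>S. norm u = 1 \<and> (\<exists>l. A *v u = l *\<^sub>R u)"
proof -
  let ?K = "S \<inter> sphere 0 1"
  have "compact ?K"
    by (simp add: S closed_subspace closed_Int_compact)
  moreover obtain x where x: "x \<in> S" "x \<noteq> 0" using ne S subspace_0 by blast
  then have "x /\<^sub>R norm x \<in> ?K" using S by (simp add: subspace_scale)
  then have "?K \<noteq> {}" by blast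
  moreover have "continuous_on ?K (\<lambda>x. x \<bullet> (A *v x))"
  proof -
    have "continuous_on ?K ((*v) A)"
      by (rule linear_continuous_on) (rule matrix_vector_mul_bounded_linear)
    then show ?thesis by (intro continuous_on_inner continuous_on_id)
  qed
  ultimately have "\<exists>u\<in>?K. \<forall>y\<in>?K. y \<bullet> (A *v y) \<le> u \<bullet> (A *v u)"
    by (rule continuous_attains_sup)
  then obtain u where u: "u \<in> ?K" and umax: "\<And>y. y \<in> ?K \<Longrightarrow> y \<bullet> (A *v y) \<le> u \<bullet> (A *v u)"
    by blast
  define l where "l = u \<bullet> (A *v u)"
  have nu: "norm u = 1" "u \<in> S" using u by auto
  have uu: "u \<bullet> u = 1" using nu by (simp add: dot_square_norm)
  have bound: "y \<bullet> (A *v y) \<le> l * (y \<bullet> y)" if y: "y \<in> S" for y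
  proof (cases "y = 0")
    case True then show ?thesis by simp
  next
    case False
    let ?y = "y /\<^sub>R norm y"
    have "?y \<in> ?K" using y False S by (simp add: subspace_scale)
    then have "?y \<bullet> (A *v ?y) \<le> l" using umax l_def by blast
    then have "(y \<bullet> (A *v y)) / (norm y)^2 \<le> l"
      by (simp add: matrix_vector_mult_scaleR power2_eq_square divide_simps)
    then show ?thesis using False
      by (simp add: divide_simps dot_square_norm)
  qed
  have orth: "v \<bullet> (A *v u) = 0" if v: "v \<in> S" "v \<bullet> u = 0" for v
  proof -
    define a where "a = v \<bullet> (A *v u)"
    define K where "K = l * (v \<bullet> v) - v \<bullet> (A *v v)"
    have K0: "K \<ge> 0" using bound[OF v(1)] K_def by simp
    have key: "2 * t * a \<le> t^2 * K" for t
    proof -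
      have "u + t *\<^sub>R v \<in> S" using S nu v by (simp add: subspace_add subspace_scale)
      from bound[OF this]
      have e1: "(u + t *\<^sub>R v) \<bullet> (A *v (u + t *\<^sub>R v)) \<le> l * ((u + t *\<^sub>R v) \<bullet> (u + t *\<^sub>R v))" .
      have av: "A *v (u + t *\<^sub>R v) = A *v u + t *\<^sub>R (A *v v)"
        by (simp add: matrix_vector_right_distrib matrix_vector_mult_scaleR)
      have uv: "u \<bullet> (A *v v) = a"
        using sym_inner[OF sym, of u v] unfolding a_def by (simp add: inner_commute)
      have "(u + t *\<^sub>R v) \<bullet> (A *v (u + t *\<^sub>R v)) = u \<bullet> (A *v u) + t * (u \<bullet> (A *v v)) + t * (v \<bullet> (A *v u)) + t^2 * (v \<bullet> (A *v v))"
        unfolding av by (simp add: inner_add_left inner_add_right algebra_simps power2_eq_square)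
      then have e2: "(u + t *\<^sub>R v) \<bullet> (A *v (u + t *\<^sub>R v)) = l + 2 * t * a + t^2 * (v \<bullet> (A *v v))"
        unfolding uv l_def a_def by simp
      have e3: "(u + t *\<^sub>R v) \<bullet> (u + t *\<^sub>R v) = 1 + t^2 * (v \<bullet> v)"
        using uu v(2) by (simp add: inner_add_left inner_add_right power2_eq_square inner_commute)
      have "l + 2 * t * a + t^2 * (v \<bullet> (A *v v)) \<le> l * (1 + t^2 * (v \<bullet> v))"
        using e1 unfolding e2 e3 .
      then show ?thesis by (simp add: K_def algebra_simps)
    qed
    have "2 * (a / (K+1)) * a \<le> (a/(K+1))^2 * K" by (rule key)
    then have "(K+1)^2 * (2 * (a / (K+1)) * a) \<le> (K+1)^2 * ((a/(K+1))^2 * K)"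
      by (rule mult_left_mono) simp
    moreover have "(K+1)^2 * (2 * (a / (K+1)) * a) = 2 * a^2 * (K+1)" using K0
      by (simp add: power2_eq_square field_simps)
    moreover have "(K+1)^2 * ((a/(K+1))^2 * K) = a^2 * K"
    proof -
      have K1: "(K+1)^2 \<noteq> 0" "K + 1 \<noteq> 0" using K0 by simp_all
      show ?thesis using K1 by (simp add: power_divide)
    qed
    ultimately have "2 * a^2 * (K+1) \<le> a^2 * K" by simp
    then have "a^2 * (K + 2) \<le> 0" using K0 by (simp add: algebra_simps)
    moreover have "a \<noteq> 0 \<Longrightarrow> a^2 * (K + 2) > 0" using K0 by simp
    ultimately have "a = 0" by linarith
    then show ?thesis unfolding a_def by simp
  qed
  define w where "w = A *v u - l *\<^sub>R u"
  have wS: "w \<in> S" using inv nu S unfolding w_def by (simp add: subspace_diff subspace_scale)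
  have wu: "w \<bullet> u = 0" unfolding w_def using uu
    by (simp add: inner_diff_left inner_diff_right l_def inner_commute[of "A *v u" u])
  have "w \<bullet> (A *v u) = 0" by (rule orth[OF wS wu])
  then have "w \<bullet> w = 0" unfolding w_def[of] using wu
    by (simp add: w_def inner_diff_right inner_diff_left inner_commute) 
  then have "w = 0" by simp
  then show ?thesis using nu unfolding w_def by auto
qed


lemma spectral:
  fixes A :: "real^'n^'n"
  assumes sym: "transpose A = A"
  shows "\<exists>Q l. orthogonal_matrix Q \<and> A = Q ** dmat l ** transpose Q"
proof -
  define P where "P B \<longleftrightarrow> pairwise orthogonal B \<and> (\<forall>b\<in>B. norm b = 1 \<and> (\<exists>l. A *v b = l *\<^sub>R b))"
    for B :: "(real^'n) set"
  have indep: "independent B" if "P B" for B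
    using that unfolding P_def by (intro pairwise_orthogonal_independent) auto
  have bnd: "card B < CARD('n) + 1" if "P B" for B
    using independent_bound[OF indep[OF that]] by simp
  have "P {}" unfolding P_def by simp
  from ex_has_greatest_nat[of P "{}" card, OF this] bnd
  obtain B where PB: "P B" and Bmax: "\<And>B'. P B' \<Longrightarrow> card B' \<le> card B" by blast
  have finB: "finite B" using independent_bound[OF indep[OF PB]] by simp
  have spanB: "span B = UNIV"
  proof (rule ccontr)
    assume "span B \<noteq> UNIV"
    from span_not_UNIV_orthogonal[OF this] obtain a :: "real^'n" where
      a: "a \<noteq> 0" "\<forall>x\<in>span B. a \<bullet> x = 0" by blast
    define S where "S = {x. \<forall>b\<in>B. b \<bullet> x = 0}"
    have subS: "subspace S" unfolding S_def subspace_def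
      by (auto simp: inner_add_right)
    have invS: "\<forall>x\<in>S. A *v x \<in> S"
    proof
      fix x assume x: "x \<in> S"
      { fix b assume b: "b \<in> B"
        then obtain l where l: "A *v b = l *\<^sub>R b" using PB unfolding P_def by blast
        have "b \<bullet> (A *v x) = (A *v b) \<bullet> x" by (rule sym_inner[OF sym])
        also have "\<dots> = 0" using x b l unfolding S_def by simp
        finally have "b \<bullet> (A *v x) = 0" . }
      then show "A *v x \<in> S" unfolding S_def by blast
    qed
    have "a \<in> S" using a(2) span_base unfolding S_def by (force simp: inner_commute)
    then have "S \<noteq> {0}" using a(1) by blast
    from eigvec_exists[OF sym subS invS this] obtain u where
      u: "u \<in> S" "norm u = 1" "\<exists>l. A *v u = l *\<^sub>R u" by blast
    have uB: "u \<notin> B"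
    proof
      assume "u \<in> B"
      then have "u \<bullet> u = 0" using u(1) unfolding S_def by blast
      then show False using u(2) by simp
    qed
    have "P (insert u B)"
      using PB u uB unfolding P_def pairwise_insert S_def orthogonal_def
      by (auto simp: inner_commute)
    from Bmax[OF this] have "card (insert u B) \<le> card B" .
    then show False using uB finB by simp
  qed
  have cardB: "card B = CARD('n)"
  proof -
    have "dim (span B) = card B" by (rule dim_span_eq_card_independent[OF indep[OF PB]])
    then show ?thesis using spanB by (simp add: dim_UNIV)
  qed
  obtain h where h: "bij_betw h (UNIV::'n set) B"
    using finite_same_card_bij[of "UNIV::'n set" B] finB cardB by auto
  have hB: "h j \<in> B" for j using h by (auto simp: bij_betw_def)
  have hinj: "h i = h j \<Longrightarrow> i = j" for i j using h by (auto simp: bij_betw_def inj_def)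
  define Q :: "real^'n^'n" where "Q = (\<chi> i j. h j $ i)"
  have QTQ: "transpose Q ** Q = mat 1"
  proof -
    have "(transpose Q ** Q) $ i $ j = h i \<bullet> h j" for i j
      by (simp add: Q_def matrix_matrix_mult_def transpose_def inner_vec_def)
    moreover have "h i \<bullet> h j = (if i = j then 1 else 0)" for i j
    proof (cases "i = j")
      case True
      then show ?thesis using PB hB[of j] unfolding P_def by (simp add: dot_square_norm)
    next
      case False
      then have "h i \<noteq> h j" using hinj by blast
      then show ?thesis using False PB hB[of i] hB[of j] unfolding P_def pairwise_def orthogonal_def by auto
    qed
    ultimately show ?thesis by (simp add: vec_eq_iff mat_def)
  qed
  then have oQ: "orthogonal_matrix Q" by (simp add: orthogonal_matrix)
  then have QQT: "Q ** transpose Q = mat 1" by (simp add: orthogonal_matrix_def)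
  define l where "l = (\<chi> j. SOME c. A *v h j = c *\<^sub>R h j)"
  have lj: "A *v h j = (l $ j) *\<^sub>R h j" for j
  proof -
    have "\<exists>c. A *v h j = c *\<^sub>R h j" using PB hB[of j] unfolding P_def by blast
    then have "A *v h j = (SOME c. A *v h j = c *\<^sub>R h j) *\<^sub>R h j" by (rule someI_ex)
    then show ?thesis unfolding l_def by simp
  qed
  have AQ: "A ** Q = Q ** dmat l"
  proof -
    have "(A ** Q) $ i $ j = (A *v h j) $ i" for i j
      by (simp add: Q_def matrix_matrix_mult_def matrix_vector_mult_def)
    then show ?thesis by (simp add: vec_eq_iff lj Q_def mult.commute)
  qed
  have "A = A ** (Q ** transpose Q)" by (simp add: QQT)
  also have "\<dots> = Q ** dmat l ** transpose Q" by (simp add: matrix_mul_assoc AQ)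
  finally show ?thesis using oQ by blast
qed


lemma matrix_inv_unique:
  fixes A X :: "real^'n^'n"
  assumes "A ** X = mat 1" "X ** A = mat 1"
  shows "matrix_inv A = X"
proof -
  have ex: "\<exists>A'. A ** A' = mat 1 \<and> A' ** A = mat 1" using assms by blast
  define Y where "Y = matrix_inv A"
  have Y: "A ** Y = mat 1 \<and> Y ** A = mat 1" unfolding Y_def matrix_inv_def by (rule someI_ex[OF ex])
  have "Y = Y ** (A ** X)" using assms by simp
  also have "\<dots> = (Y ** A) ** X" by (simp add: matrix_mul_assoc)
  also have "\<dots> = X" using Y by simp
  finally show ?thesis unfolding Y_def .
qed

lemma orth_inner:
  fixes Q :: "real^'n^'n"
  assumes "orthogonal_matrix Q"
  shows "(Q *v y) \<bullet> (Q *v z) = y \<bullet> z"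
proof -
  have "(Q *v y) \<bullet> (Q *v z) = ((Q *v y) v* Q) \<bullet> z" by (simp add: dot_lmul_matrix)
  also have "(Q *v y) v* Q = (transpose Q ** Q) *v y"
    by (metis matrix_vector_mul_assoc transpose_matrix_vector)
  finally show ?thesis using assms by (simp add: orthogonal_matrix_def)
qed

lemma orthT: "orthogonal_matrix Q \<Longrightarrow> transpose Q ** Q = mat 1" "orthogonal_matrix Q \<Longrightarrow> Q ** transpose Q = mat 1"
  by (simp_all add: orthogonal_matrix_def)

lemma det_orth_sq: fixes Q :: "real^'n^'n" shows "orthogonal_matrix Q \<Longrightarrow> det Q * det Q = 1"
  using det_orthogonal_matrix[of Q] by auto

lemma det_conj:
  fixes Q :: "real^'n^'n"
  assumes "orthogonal_matrix Q"
  shows "det (Q ** dmat a ** transpose Q) = (\<Prod>i\<in>UNIV. a$i)"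
proof -
  have "det (Q ** dmat a ** transpose Q) = det Q * det (dmat a) * det (transpose Q)"
    by (simp only: det_mul)
  also have "\<dots> = (det Q * det Q) * det (dmat a)" by (simp only: det_transpose ac_simps)
  also have "\<dots> = det (dmat a)" using det_orth_sq[OF assms] by (simp only: mult_1)
  finally show ?thesis by (simp only: det_dmat)
qed

lemma trace_conj:
  fixes Q :: "real^'n^'n"
  assumes "orthogonal_matrix Q"
  shows "trace (Q ** dmat a ** transpose Q) = (\<Sum>i\<in>UNIV. a$i)"
proof -
  have "trace (Q ** dmat a ** transpose Q) = trace (transpose Q ** (Q ** dmat a))"
    by (rule trace_mul_sym)
  also have "transpose Q ** (Q ** dmat a) = (transpose Q ** Q) ** dmat a"
    by (simp only: matrix_mul_assoc)
  also have "\<dots> = dmat a" using assms by (simp only: orthT matrix_mul_lid)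
  finally show ?thesis by (simp only: trace_dmat)
qed

lemma conj_mul:
  fixes Q :: "real^'n^'n"
  assumes "orthogonal_matrix Q"
  shows "(Q ** dmat a ** transpose Q) ** (Q ** dmat b ** transpose Q) = Q ** dmat (\<chi> i. a$i * b$i) ** transpose Q"
proof -
  have "(Q ** dmat a ** transpose Q) ** (Q ** dmat b ** transpose Q)
      = Q ** dmat a ** (transpose Q ** Q) ** dmat b ** transpose Q"
    by (simp only: matrix_mul_assoc)
  also have "\<dots> = Q ** (dmat a ** dmat b) ** transpose Q"
    using assms by (simp only: orthT matrix_mul_rid matrix_mul_assoc)
  finally show ?thesis by (simp only: dmat_mul)
qed

lemma conj_one:
  fixes Q :: "real^'n^'n"
  assumes "orthogonal_matrix Q"
  shows "Q ** dmat (\<chi> i. 1) ** transpose Q = mat 1"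
  using assms by (simp only: dmat_const scaleR_one matrix_mul_rid orthT)

lemma transpose_conj: "transpose (Q ** dmat a ** transpose Q) = (Q ** dmat a ** transpose Q)"
  by (simp only: matrix_transpose_mul transpose_transpose transpose_dmat matrix_mul_assoc)

lemma dmat_vec: "dmat a *v y = (\<chi> i. a$i * y$i)"
proof -
  have "(dmat a *v y)$i = a$i * y$i" for i
  proof -
    have "(dmat a *v y)$i = (\<Sum>j\<in>UNIV. (if j = i then a$i * y$j else 0))"
      by (simp only: matrix_vector_mult_def vec_lambda_beta dmat_nth) (rule sum.cong, auto)
    also have "\<dots> = a$i * y$i" by simp
    finally show ?thesis .
  qed
  then show ?thesis by (simp add: vec_eq_iff)
qed

lemma conj_apply:
  fixes Q :: "real^'n^'n"
  assumes oQ: "orthogonal_matrix Q"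
  shows "(Q ** dmat a ** transpose Q) *v (Q *v y) = Q *v (dmat a *v y)"
proof -
  have "(Q ** dmat a ** transpose Q) ** Q = Q ** dmat a" using oQ
    by (simp only: matrix_mul_assoc[symmetric] orthT matrix_mul_rid)
  then show ?thesis by (simp only: matrix_vector_mul_assoc)
qed

lemma spd_eig_pos:
  fixes Q :: "real^'n^'n"
  assumes oQ: "orthogonal_matrix Q" and s: "spd (Q ** dmat a ** transpose Q)"
  shows "a $ i > 0"
proof -
  define e :: "real^'n" where "e = axis i 1"
  define x where "x = Q *v e"
  have tx: "transpose Q *v x = e" unfolding x_def using oQ
    by (simp add: matrix_vector_mul_assoc orthT del: transpose_matrix_vector)
  have "x \<noteq> 0"
  proof
    assume "x = 0"
    then have "e = 0" using tx by (simp del: transpose_matrix_vector)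
    then show False unfolding e_def by (simp add: axis_eq_0_iff)
  qed
  then have pos: "x \<bullet> ((Q ** dmat a ** transpose Q) *v x) > 0" using s unfolding spd_def by blast
  have "(Q ** dmat a ** transpose Q) *v x = Q *v (dmat a *v e)"
    unfolding x_def by (rule conj_apply[OF oQ])
  then have "x \<bullet> ((Q ** dmat a ** transpose Q) *v x) = e \<bullet> (dmat a *v e)"
    unfolding x_def by (simp add: orth_inner[OF oQ])
  also have "\<dots> = a $ i"
    by (simp add: e_def inner_axis' dmat_vec)
  finally show ?thesis using pos by simp
qed

lemma spd_conj:
  fixes Q :: "real^'n^'n"
  assumes oQ: "orthogonal_matrix Q" and pos: "\<And>i. a $ i > 0"
  shows "spd (Q ** dmat a ** transpose Q)"
  unfolding spd_def
proof (intro conjI allI impI)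
  show "transpose (Q ** dmat a ** transpose Q) = Q ** dmat a ** transpose Q" by (rule transpose_conj)
  fix x :: "real^'n" assume x: "x \<noteq> 0"
  define y where "y = transpose Q *v x"
  have "Q *v y = x" unfolding y_def using oQ
    by (simp add: matrix_vector_mul_assoc orthT del: transpose_matrix_vector)
  then have y0: "y \<noteq> 0" using x by auto
  have "x \<bullet> ((Q ** dmat a ** transpose Q) *v x) = (Q *v y) \<bullet> (Q *v (dmat a *v y))"
    using conj_apply[OF oQ, of a y] \<open>Q *v y = x\<close> by simp
  also have "\<dots> = y \<bullet> (dmat a *v y)" by (rule orth_inner[OF oQ])
  also have "\<dots> = (\<Sum>i\<in>UNIV. a$i * (y$i)^2)"
    by (simp add: inner_vec_def dmat_vec power2_eq_square algebra_simps)
  also have "\<dots> > 0"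
  proof -
    obtain j where "y $ j \<noteq> 0" using y0 by (auto simp: vec_eq_iff)
    then have "a$j * (y$j)^2 > 0" using pos[of j] by simp
    moreover have "\<forall>i\<in>UNIV. 0 \<le> a$i * (y$i)^2" using pos by (simp add: less_imp_le)
    ultimately show ?thesis by (intro sum_pos2[of UNIV j]) auto
  qed
  finally show "0 < x \<bullet> ((Q ** dmat a ** transpose Q) *v x)" .
qed


lemma spd_decomp:
  fixes B :: "real^'n^'n"
  assumes "spd B"
  shows "\<exists>Q b. orthogonal_matrix Q \<and> (\<forall>i. b$i > 0) \<and> B = Q ** dmat b ** transpose Q"
proof -
  have "transpose B = B" using assms by (simp add: spd_def)
  from spectral[OF this] obtain Q b where Q: "orthogonal_matrix Q" "B = Q ** dmat b ** transpose Q" by blast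
  then have "\<forall>i. b$i > 0" using spd_eig_pos[OF Q(1)] assms by auto
  then show ?thesis using Q by blast
qed

lemma spd_det_pos:
  fixes B :: "real^'n^'n"
  assumes "spd B" shows "det B > 0"
proof -
  obtain Q b where Q: "orthogonal_matrix Q" "\<forall>i. b$i > 0" "B = Q ** dmat b ** transpose Q"
    using spd_decomp[OF assms] by blast
  then show ?thesis by (simp add: det_conj prod_pos)
qed

lemma ln_strict:
  fixes x :: real
  assumes "x > 0" "x \<noteq> 1"
  shows "ln x < x - 1"
proof -
  have s: "sqrt x > 0" "sqrt x \<noteq> 1" "sqrt x * sqrt x = x" using assms by auto
  have "ln x = 2 * ln (sqrt x)" using assms by (simp add: ln_sqrt)
  also have "\<dots> \<le> 2 * (sqrt x - 1)" using ln_le_minus_one[OF s(1)] by simp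
  also have "\<dots> < x - 1"
  proof -
    have "(sqrt x - 1)^2 > 0" using s(2) by simp
    then show ?thesis using s(3) by (simp add: power2_eq_square algebra_simps)
  qed
  finally show ?thesis .
qed

lemma keyK:
  fixes A B :: "real^'n^'n"
  assumes sA: "spd A" and sB: "spd B"
  shows "ln (det A) - ln (det B) \<le> trace (A ** matrix_inv B) - real CARD('n)"
    and "trace (A ** matrix_inv B) - real CARD('n) \<le> ln (det A) - ln (det B) \<Longrightarrow> A = B"
proof -
  obtain Q b where Q: "orthogonal_matrix Q" and bpos: "\<And>i. b$i > 0" and B: "B = Q ** dmat b ** transpose Q"
    using spd_decomp[OF sB] by blast
  define R where "R = Q ** dmat (\<chi> i. 1 / sqrt (b$i)) ** transpose Q"
  define S where "S = Q ** dmat (\<chi> i. sqrt (b$i)) ** transpose Q"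
  have RS: "R ** S = mat 1"
  proof -
    have "(\<chi> i. (\<chi> i. 1 / sqrt (b$i)) $ i * (\<chi> i. sqrt (b$i)) $ i) = (\<chi> i. (1::real))"
      using bpos by (simp add: vec_eq_iff less_imp_le less_imp_neq[symmetric])
    then show ?thesis unfolding R_def S_def conj_mul[OF Q] using conj_one[OF Q] by simp
  qed
  have SR: "S ** R = mat 1"
  proof -
    have "(\<chi> i. (\<chi> i. sqrt (b$i)) $ i * (\<chi> i. 1 / sqrt (b$i)) $ i) = (\<chi> i. (1::real))"
      using bpos by (simp add: vec_eq_iff less_imp_le less_imp_neq[symmetric])
    then show ?thesis unfolding R_def S_def conj_mul[OF Q] using conj_one[OF Q] by simp
  qed
  have SS: "S ** S = B"
  proof -
    have "(\<chi> i. (\<chi> i. sqrt (b$i)) $ i * (\<chi> i. sqrt (b$i)) $ i) = b"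
      using bpos by (simp add: vec_eq_iff less_imp_le less_imp_neq[symmetric])
    then show ?thesis unfolding S_def conj_mul[OF Q] B by simp
  qed
  have invB: "matrix_inv B = R ** R"
  proof (rule matrix_inv_unique)
    show "B ** (R ** R) = mat 1"
      by (metis SS RS SR matrix_mul_assoc matrix_mul_rid)
    show "R ** R ** B = mat 1"
      by (metis SS RS SR matrix_mul_assoc matrix_mul_rid)
  qed
  have trR: "transpose R = R" unfolding R_def by (rule transpose_conj)
  have trA: "transpose A = A" using sA by (simp add: spd_def)
  define M where "M = R ** A ** R"
  have sM: "spd M"
    unfolding spd_def
  proof (intro conjI allI impI)
    show "transpose M = M" unfolding M_def
      by (simp add: matrix_transpose_mul trR trA matrix_mul_assoc)
    fix x :: "real^'n" assume x: "x \<noteq> 0"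
    have Rx: "R *v x \<noteq> 0"
    proof
      assume "R *v x = 0"
      then have "S *v (R *v x) = 0" by simp
      then have "x = 0" using SR by (simp add: matrix_vector_mul_assoc)
      then show False using x by simp
    qed
    have "x \<bullet> (M *v x) = x \<bullet> (R *v (A *v (R *v x)))"
      unfolding M_def by (simp add: matrix_vector_mul_assoc matrix_mul_assoc)
    also have "\<dots> = (R *v x) \<bullet> (A *v (R *v x))" using sym_inner[OF trR] by simp
    also have "\<dots> > 0" using sA Rx unfolding spd_def by blast
    finally show "0 < x \<bullet> (M *v x)" .
  qed
  obtain P l where P: "orthogonal_matrix P" and lpos: "\<And>i. l$i > 0" and M: "M = P ** dmat l ** transpose P"
    using spd_decomp[OF sM] by blast
  have tr: "trace (A ** matrix_inv B) = (\<Sum>i\<in>UNIV. l$i)"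
  proof -
    have "trace (A ** matrix_inv B) = trace ((A ** R) ** R)" by (simp add: invB matrix_mul_assoc)
    also have "\<dots> = trace (R ** (A ** R))" by (rule trace_mul_sym)
    also have "\<dots> = trace M" by (simp add: M_def matrix_mul_assoc)
    finally show ?thesis using trace_conj[OF P] M by simp
  qed
  have detB: "det B = det S * det S" using SS by (metis det_mul)
  have detRS: "det R * det S = 1" using RS by (metis det_mul det_I)
  have dBpos: "det B > 0" by (rule spd_det_pos[OF sB])
  have dApos: "det A > 0" by (rule spd_det_pos[OF sA])
  have detM: "det M = det A / det B"
  proof -
    have "det M = (det R * det S) * (det R * det S) * det A / (det S * det S)"
    proof -
      have dS: "det S \<noteq> 0" using detRS by auto
      show ?thesis using dS unfolding M_def by (simp add: det_mul)
    qed
    then show ?thesis using detRS detB by simp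
  qed
  have prodl: "det M = (\<Prod>i\<in>UNIV. l$i)" using det_conj[OF P] M by simp
  have lnsum: "ln (det A) - ln (det B) = (\<Sum>i\<in>UNIV. ln (l$i))"
  proof -
    have "ln (det A) - ln (det B) = ln (det M)" using detM dApos dBpos by (simp add: ln_divide_pos)
    also have "\<dots> = (\<Sum>i\<in>UNIV. ln (l$i))" unfolding prodl using lpos
      by (subst ln_prod) (auto simp: less_imp_neq[symmetric])
    finally show ?thesis .
  qed
  have trd: "trace (A ** matrix_inv B) - real CARD('n) = (\<Sum>i\<in>UNIV. l$i - 1)"
    by (simp add: tr sum_subtractf)
  have each: "ln (l$i) \<le> l$i - 1" for i using ln_le_minus_one[OF lpos[of i]] .
  show "ln (det A) - ln (det B) \<le> trace (A ** matrix_inv B) - real CARD('n)"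
    unfolding lnsum trd by (rule sum_mono) (simp add: each)
  assume eq: "trace (A ** matrix_inv B) - real CARD('n) \<le> ln (det A) - ln (det B)"
  have "(\<Sum>i\<in>UNIV. (l$i - 1) - ln (l$i)) \<le> 0"
    using eq unfolding lnsum trd by (simp add: sum_subtractf)
  moreover have nn: "\<forall>i\<in>UNIV. 0 \<le> (l$i - 1) - ln (l$i)" using each by simp
  ultimately have "(\<Sum>i\<in>UNIV. (l$i - 1) - ln (l$i)) = 0"
    by (simp add: order_antisym sum_nonneg)
  then have z: "\<forall>i\<in>UNIV. (l$i - 1) - ln (l$i) = 0" using nn by (simp add: sum_nonneg_eq_0_iff)
  have l1: "l$i = 1" for i
  proof (rule ccontr)
    assume "l$i \<noteq> 1"
    from ln_strict[OF lpos this] z show False by auto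
  qed
  then have "l = (\<chi> i. 1)" by (simp add: vec_eq_iff)
  then have "M = mat 1" using M conj_one[OF P] by simp
  then have "S ** M ** S = B" using SS by simp
  moreover have "S ** M ** S = A" unfolding M_def
    by (metis SR RS matrix_mul_assoc matrix_mul_lid matrix_mul_rid)
  ultimately show "A = B" by simp
qed


locale dag =
  fixes V :: "'v set" and E :: "('v \<times> 'v) set" and G :: "'v set"
  assumes finV: "finite V" and EV: "E \<subseteq> V \<times> V" and acyc: "acyclic E"
    and GV: "G \<subseteq> V" and sinksG: "sinks V E \<subseteq> G" and sourcesG: "sources V E \<subseteq> G"
begin

definition Out :: "('v \<Rightarrow> real) \<Rightarrow> 'v \<Rightarrow> real" where
  "Out c u = (\<Sum>e\<in>{e\<in>E. fst e = u}. c u / c (snd e))"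
definition In :: "('v \<Rightarrow> real) \<Rightarrow> 'v \<Rightarrow> real" where
  "In c u = (\<Sum>e\<in>{e\<in>E. snd e = u}. c (fst e) / c u)"

lemma finE: "finite E"
  using EV finV by (meson finite_SigmaI finite_subset)

lemma noloop: "(u, u) \<notin> E"
  using acyc by (meson acyclic_def r_into_trancl')

lemma edgeV: "(v, w) \<in> E \<Longrightarrow> v \<in> V \<and> w \<in> V"
  using EV by auto

lemma out_edge: "u \<in> V - G \<Longrightarrow> \<exists>w. (u, w) \<in> E"
  using sinksG unfolding sinks_def by auto

lemma in_edge: "u \<in> V - G \<Longrightarrow> \<exists>v. (v, u) \<in> E"
  using sourcesG unfolding sources_def by auto

lemma propagate:
  assumes edge: "\<And>v w. (v, w) \<in> E \<Longrightarrow> f v = f w" and bd: "\<And>v. v \<in> G \<Longrightarrow> f v = K"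
  shows "v \<in> V \<Longrightarrow> f v = K"
proof -
  have wf: "wf (E\<inverse>)" by (rule finite_acyclic_wf_converse[OF finE acyc])
  show "v \<in> V \<Longrightarrow> f v = K"
  proof (induction v rule: wf_induct[OF wf])
    case (1 u)
    show ?case
    proof (cases "u \<in> G")
      case True then show ?thesis using bd by blast
    next
      case False
      then obtain w where uw: "(u, w) \<in> E" using out_edge 1(2) by blast
      then have "f w = K" using 1(1) edgeV by blast
      then show ?thesis using edge[OF uw] by simp
    qed
  qed
qed

lemma rearr:
  assumes crit: "\<And>u. u \<in> V - G \<Longrightarrow> Out c u = In c u" and phi: "\<And>u. u \<in> G \<Longrightarrow> phi u = 0"
  shows "(\<Sum>e\<in>E. c (fst e) / c (snd e) * (phi (fst e) - phi (snd e))) = 0"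
proof -
  have s1: "(\<Sum>e\<in>E. c (fst e) / c (snd e) * phi (fst e)) = (\<Sum>u\<in>V. phi u * Out c u)"
  proof -
    have "(\<Sum>e\<in>E. c (fst e) / c (snd e) * phi (fst e))
        = (\<Sum>u\<in>V. \<Sum>e\<in>{e. e \<in> E \<and> fst e = u}. c (fst e) / c (snd e) * phi (fst e))"
      by (rule sum.group[symmetric]) (use finE finV EV in auto)
    also have "\<dots> = (\<Sum>u\<in>V. phi u * Out c u)"
      unfolding Out_def by (intro sum.cong refl) (auto simp: sum_distrib_left intro!: sum.cong)
    finally show ?thesis .
  qed
  have s2: "(\<Sum>e\<in>E. c (fst e) / c (snd e) * phi (snd e)) = (\<Sum>u\<in>V. phi u * In c u)"
  proof -
    have "(\<Sum>e\<in>E. c (fst e) / c (snd e) * phi (snd e))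
        = (\<Sum>u\<in>V. \<Sum>e\<in>{e. e \<in> E \<and> snd e = u}. c (fst e) / c (snd e) * phi (snd e))"
      by (rule sum.group[symmetric]) (use finE finV EV in auto)
    also have "\<dots> = (\<Sum>u\<in>V. phi u * In c u)"
      unfolding In_def by (intro sum.cong refl) (auto simp: sum_distrib_left intro!: sum.cong)
    finally show ?thesis .
  qed
  have "(\<Sum>e\<in>E. c (fst e) / c (snd e) * (phi (fst e) - phi (snd e)))
      = (\<Sum>e\<in>E. c (fst e) / c (snd e) * phi (fst e)) - (\<Sum>e\<in>E. c (fst e) / c (snd e) * phi (snd e))"
    by (simp add: right_diff_distrib sum_subtractf)
  also have "\<dots> = (\<Sum>u\<in>V. phi u * (Out c u - In c u))"
    unfolding s1 s2 by (simp add: right_diff_distrib sum_subtractf)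
  also have "\<dots> = 0"
  proof (rule sum.neutral, rule ballI)
    fix u assume "u \<in> V"
    then show "phi u * (Out c u - In c u) = 0" using crit phi by (cases "u \<in> G") auto
  qed
  finally show ?thesis .
qed

end


context dag begin

definition desc :: "'v \<Rightarrow> 'v set" where "desc u = {w. (u, w) \<in> E\<^sup>+}"

lemma desc_sub: "desc u \<subseteq> V"
proof -
  have "E\<^sup>+ \<subseteq> V \<times> V" using EV by (rule trancl_subset_Sigma)
  then show ?thesis unfolding desc_def by auto
qed

lemma desc_less: assumes "(u, w) \<in> E" shows "card (desc w) < card (desc u)"
proof (rule psubset_card_mono)
  show "finite (desc u)" using desc_sub finV finite_subset by blast
  have "desc w \<subseteq> desc u" unfolding desc_def using assms by (auto intro: trancl_into_trancl2)
  moreover have "w \<in> desc u" unfolding desc_def using assms by auto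
  moreover have "w \<notin> desc w" unfolding desc_def using acyc by (auto simp: acyclic_def)
  ultimately show "desc w \<subset> desc u" by blast
qed

lemma upper_bound:
  fixes c :: "'v \<Rightarrow> real" and R Mx :: real
  assumes edge: "\<And>v w. (v, w) \<in> E \<Longrightarrow> c v \<le> R * c w" and pos: "\<And>v. v \<in> V \<Longrightarrow> c v > 0"
    and bd: "\<And>v. v \<in> G \<Longrightarrow> c v \<le> Mx" and R1: "R \<ge> 1" and Mx: "Mx > 0"
  shows "u \<in> V \<Longrightarrow> c u \<le> R ^ card V * Mx"
proof -
  have main: "u \<in> V \<Longrightarrow> c u \<le> R ^ card (desc u) * Mx" for u
  proof (induction "card (desc u)" arbitrary: u rule: less_induct)
    case less
    show ?case
    proof (cases "u \<in> G")
      case True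
      then have "c u \<le> Mx" using bd by blast
      also have "\<dots> \<le> R ^ card (desc u) * Mx" using R1 Mx by simp
      finally show ?thesis .
    next
      case False
      then obtain w where uw: "(u, w) \<in> E" using out_edge less.prems by blast
      have wV: "w \<in> V" using edgeV[OF uw] by simp
      have lt: "card (desc w) < card (desc u)" by (rule desc_less[OF uw])
      have "c w \<le> R ^ card (desc w) * Mx" using less.hyps[OF lt wV] by simp
      then have "c u \<le> R * (R ^ card (desc w) * Mx)"
        using edge[OF uw] R1 by (smt (verit, best) mult_left_mono)
      also have "\<dots> = R ^ Suc (card (desc w)) * Mx" by simp
      also have "\<dots> \<le> R ^ card (desc u) * Mx"
        using lt R1 Mx by (intro mult_right_mono power_increasing) auto
      finally show ?thesis .
    qed
  qed
  assume uV: "u \<in> V"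
  have "card (desc u) \<le> card V" using desc_sub finV by (rule card_mono[rotated])
  then have "R ^ card (desc u) * Mx \<le> R ^ card V * Mx"
    using R1 Mx by (intro mult_right_mono power_increasing) auto
  then show ?thesis using main[OF uV] by simp
qed

end

lemma dag_converse: "dag V E G \<Longrightarrow> dag V (E\<inverse>) G"
  unfolding dag_def sinks_def sources_def by auto

context dag begin

lemma lower_bound:
  fixes c :: "'v \<Rightarrow> real" and R mn :: real
  assumes edge: "\<And>v w. (v, w) \<in> E \<Longrightarrow> c v \<le> R * c w" and pos: "\<And>v. v \<in> V \<Longrightarrow> c v > 0"
    and bd: "\<And>v. v \<in> G \<Longrightarrow> mn \<le> c v" and R1: "R \<ge> 1" and mn: "mn > 0"
  shows "u \<in> V \<Longrightarrow> mn / R ^ card V \<le> c u"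
proof -
  interpret rev: dag V "E\<inverse>" G by (rule dag_converse) (rule dag_axioms)
  assume uV: "u \<in> V"
  have "(\<lambda>v. 1 / c v) u \<le> R ^ card V * (1 / mn)"
  proof (rule rev.upper_bound[OF _ _ _ R1 _ uV])
    fix v w assume "(v, w) \<in> E\<inverse>"
    then have vw: "(w, v) \<in> E" by simp
    have "c w \<le> R * c v" by (rule edge[OF vw])
    then show "1 / c v \<le> R * (1 / c w)" using pos edgeV[OF vw]
      by (simp add: divide_simps mult.commute)
  next
    fix v assume "v \<in> V" then show "1 / c v > 0" using pos by simp
  next
    fix v assume v: "v \<in> G"
    then have "v \<in> V" using GV by blast
    then show "1 / c v \<le> 1 / mn" using bd[OF v] mn pos by (simp add: frac_le)
  next
    show "1 / mn > 0" using mn by simp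
  qed
  then show ?thesis using pos[OF uV] mn R1 by (simp add: divide_simps) (simp add: mult.commute)
qed

end
context dag begin

definition F :: "('v \<Rightarrow> real) \<Rightarrow> real" where "F c = (\<Sum>e\<in>E. c (fst e) / c (snd e))"

lemma F_edge_le:
  assumes pos: "\<And>v. v \<in> V \<Longrightarrow> c v > 0" and e: "(v, w) \<in> E"
  shows "c v / c w \<le> F c"
proof -
  have "(\<lambda>e. c (fst e) / c (snd e)) (v, w) \<le> (\<Sum>e\<in>E. c (fst e) / c (snd e))"
  proof (rule member_le_sum[OF e _ finE])
    fix x assume "x \<in> E - {(v, w)}"
    then have "fst x \<in> V" "snd x \<in> V" using EV by auto
    then show "0 \<le> c (fst x) / c (snd x)" using pos by (simp add: less_imp_le)
  qed
  then show ?thesis unfolding F_def by simp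
qed

lemma F_scale:
  assumes pos: "\<And>v. v \<in> V \<Longrightarrow> c v > 0" and u: "u \<in> V" and t: "t > 0"
  shows "F (c(u := t * c u)) = F c + (t - 1) * Out c u + (1/t - 1) * In c u"
proof -
  define c' where "c' = c(u := t * c u)"
  have cu: "c u > 0" using pos u by blast
  have d: "c' (fst e) / c' (snd e) = c (fst e) / c (snd e)
      + ((if fst e = u then (t - 1) * (c u / c (snd e)) else 0)
      + (if snd e = u then (1/t - 1) * (c (fst e) / c u) else 0))" if e: "e \<in> E" for e
  proof -
    obtain v w where vw: "e = (v, w)" by force
    have "(v, w) \<in> E" using e vw by simp
    then have nl: "v \<noteq> w" using noloop by blast
    show ?thesis
    proof (cases "v = u")
      case True
      then show ?thesis using nl vw t cu unfolding c'_def by (simp add: diff_divide_distrib left_diff_distrib)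
    next
      case False
      then show ?thesis using nl vw t cu unfolding c'_def by (cases "w = u") (simp_all add: field_simps)
    qed
  qed
  have "F c' = (\<Sum>e\<in>E. c (fst e) / c (snd e)
      + ((if fst e = u then (t - 1) * (c u / c (snd e)) else 0)
      + (if snd e = u then (1/t - 1) * (c (fst e) / c u) else 0)))"
    unfolding F_def using d by (rule sum.cong[OF refl])
  also have "\<dots> = F c + ((\<Sum>e\<in>E. (if fst e = u then (t - 1) * (c u / c (snd e)) else 0))
      + (\<Sum>e\<in>E. (if snd e = u then (1/t - 1) * (c (fst e) / c u) else 0)))"
    unfolding F_def by (simp add: sum.distrib)
  also have "(\<Sum>e\<in>E. (if fst e = u then (t - 1) * (c u / c (snd e)) else 0)) = (t - 1) * Out c u"
    unfolding Out_def sum.inter_filter[OF finE] sum_distrib_left by (rule sum.cong) auto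
  also have "(\<Sum>e\<in>E. (if snd e = u then (1/t - 1) * (c (fst e) / c u) else 0)) = (1/t - 1) * In c u"
    unfolding In_def sum.inter_filter[OF finE] sum_distrib_left by (rule sum.cong) auto
  finally have X: "F c' = F c + ((t - 1) * Out c u + (1 / t - 1) * In c u)" .
  show ?thesis using X unfolding c'_def by (simp only: add.assoc)
qed

lemma Out_pos:
  assumes pos: "\<And>v. v \<in> V \<Longrightarrow> c v > 0" and u: "u \<in> V - G"
  shows "Out c u > 0"
proof -
  obtain w where uw: "(u, w) \<in> E" using out_edge[OF u] by blast
  show ?thesis unfolding Out_def
  proof (rule sum_pos2[of _ "(u, w)"])
    show "finite {e \<in> E. fst e = u}" using finE by simp
    show "(u, w) \<in> {e \<in> E. fst e = u}" using uw by simp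
    show "0 < c u / c (snd (u, w))" using pos edgeV[OF uw] by simp
    fix e assume "e \<in> {e \<in> E. fst e = u}"
    then have "snd e \<in> V" "fst e \<in> V" using EV by auto
    then show "0 \<le> c u / c (snd e)" using pos u by (simp add: less_imp_le)
  qed
qed

lemma In_pos:
  assumes pos: "\<And>v. v \<in> V \<Longrightarrow> c v > 0" and u: "u \<in> V - G"
  shows "In c u > 0"
proof -
  obtain v where vu: "(v, u) \<in> E" using in_edge[OF u] by blast
  show ?thesis unfolding In_def
  proof (rule sum_pos2[of _ "(v, u)"])
    show "finite {e \<in> E. snd e = u}" using finE by simp
    show "(v, u) \<in> {e \<in> E. snd e = u}" using vu by simp
    show "0 < c (fst (v, u)) / c u" using pos edgeV[OF vu] by simp
    fix e assume "e \<in> {e \<in> E. snd e = u}"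
    then have "snd e \<in> V" "fst e \<in> V" using EV by auto
    then show "0 \<le> c (fst e) / c u" using pos u by (simp add: less_imp_le)
  qed
qed

end

lemma crit_alg:
  fixes P Q :: real
  assumes P: "P > 0" and Q: "Q > 0" and h: "\<And>t. t > 0 \<Longrightarrow> 0 \<le> (t - 1) * P + (1/t - 1) * Q"
  shows "P = Q"
proof -
  define t where "t = sqrt Q / sqrt P"
  have t: "t > 0" unfolding t_def using P Q by simp
  have sP: "sqrt P * sqrt P = P" and sQ: "sqrt Q * sqrt Q = Q" using P Q by simp_all
  have "0 \<le> (t - 1) * P + (1/t - 1) * Q" by (rule h[OF t])
  also have "\<dots> = 2 * sqrt P * sqrt Q - P - Q"
    unfolding t_def using P Q sP sQ by (simp add: field_simps)
  also have "\<dots> = - ((sqrt P - sqrt Q)^2)" using sP sQ by (simp add: power2_eq_square algebra_simps)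
  finally have "(sqrt P - sqrt Q)^2 \<le> 0" by simp
  then have "sqrt P = sqrt Q" by simp
  then show ?thesis using P Q by simp
qed

context dag begin

lemma scalar_exists:
  assumes c0: "\<And>v. v \<in> G \<Longrightarrow> c0 v > 0"
  shows "\<exists>c. (\<forall>v\<in>V. c v > 0) \<and> (\<forall>v\<in>G. c v = c0 v) \<and> (\<forall>u\<in>V-G. Out c u = In c u)"
proof -
  define b where "b v = (if v \<in> G then c0 v else 1)" for v
  define R where "R = max 1 (F b)"
  define Mx where "Mx = Max (insert 1 (c0 ` G))"
  define mn where "mn = Min (insert 1 (c0 ` G))"
  define N where "N = card V"
  have finG: "finite G" using GV finV finite_subset by blast
  have R1: "R \<ge> 1" unfolding R_def by simp
  have Mx1: "Mx \<ge> 1" unfolding Mx_def using finG by simp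
  have Mxb: "v \<in> G \<Longrightarrow> c0 v \<le> Mx" for v unfolding Mx_def using finG by simp
  have mn0: "mn > 0" unfolding mn_def using finG c0 by (subst Min_gr_iff) auto
  have mn1: "mn \<le> 1" unfolding mn_def using finG by simp
  have mnb: "v \<in> G \<Longrightarrow> mn \<le> c0 v" for v unfolding mn_def using finG by simp
  have RN: "R ^ N \<ge> 1" using R1 by simp
  define lo where "lo = mn / (2 * R ^ N)"
  define hi where "hi = 2 * R ^ N * Mx"
  have lo0: "lo > 0" unfolding lo_def using mn0 RN by simp
  have lo_lt: "lo < mn / R ^ N" unfolding lo_def using mn0 RN by (simp add: divide_simps)
  have hi_gt: "R ^ N * Mx < hi" unfolding hi_def using Mx1 RN by simp
  have "lo \<le> mn" unfolding lo_def using mn0 RN by (simp add: divide_simps)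
  then have lo1: "lo \<le> 1" using mn1 by simp
  have "1 * 1 \<le> R ^ N * Mx" by (rule mult_mono[OF RN Mx1]) (use RN in auto)
  then have hi1: "1 \<le> hi" using hi_gt by simp
  define S where "S v = (if v \<in> V - G then {lo..hi} else {b v})" for v
  define K where "K = PiE UNIV S"
  have K_iff: "c \<in> K \<longleftrightarrow> (\<forall>v. c v \<in> S v)" for c unfolding K_def by (simp add: PiE_def Pi_def)
  have S0: "x \<in> S v \<Longrightarrow> x > 0" for x v
    unfolding S_def b_def using lo0 c0 by (auto split: if_splits)
  have bK: "b \<in> K" unfolding K_iff S_def using lo1 hi1 b_def by auto
  have cK: "compact K"
  proof -
    have "compactin (product_topology (\<lambda>i. euclidean) UNIV) (PiE UNIV S)"
      by (subst compactin_PiE) (auto simp: S_def)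
    then show ?thesis unfolding K_def euclidean_product_topology by simp
  qed
  have contF: "continuous_on K F"
    unfolding F_def
  proof (intro continuous_on_sum continuous_on_divide ballI)
    fix e :: "'v \<times> 'v"
    show "continuous_on K (\<lambda>c. c (fst e))" "continuous_on K (\<lambda>c. c (snd e))"
      by (rule continuous_on_subset[OF continuous_on_product_coordinates], simp)+
    fix c assume "c \<in> K" then show "c (snd e) \<noteq> 0" using S0 K_iff by (metis less_irrefl)
  qed
  obtain cs where csK: "cs \<in> K" and csmin: "\<And>c. c \<in> K \<Longrightarrow> F cs \<le> F c"
    using continuous_attains_inf[OF cK _ contF] bK by blast
  have cspos: "v \<in> V \<Longrightarrow> cs v > 0" for v using csK S0 K_iff by blast
  have csG: "cs v = c0 v" if v: "v \<in> G" for v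
  proof -
    have "cs v \<in> S v" using csK K_iff by blast
    then show ?thesis using v unfolding S_def b_def by simp
  qed
  have glob: "F cs \<le> F c" if pos: "\<And>v. v \<in> V \<Longrightarrow> c v > 0" and cG: "\<And>v. v \<in> G \<Longrightarrow> c v = c0 v" for c
  proof (cases "F c \<le> R")
    case False
    have "F cs \<le> F b" using csmin bK by blast
    also have "\<dots> \<le> R" unfolding R_def by simp
    finally show ?thesis using False by simp
  next
    case True
    have edge: "c v \<le> R * c w" if e: "(v, w) \<in> E" for v w
    proof -
      have "c v / c w \<le> R" using F_edge_le[of c, OF pos e] True by simp
      then show ?thesis using pos edgeV[OF e] by (simp add: divide_simps mult.commute)
    qed
    have ub: "u \<in> V \<Longrightarrow> c u \<le> R ^ N * Mx" for u
      unfolding N_def by (rule upper_bound[OF edge pos _ R1]) (use cG Mxb Mx1 in auto)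
    have lb: "u \<in> V \<Longrightarrow> mn / R ^ N \<le> c u" for u
      unfolding N_def by (rule lower_bound[OF edge pos _ R1 mn0]) (use cG mnb in auto)
    define c' where "c' v = (if v \<in> V - G then c v else b v)" for v
    have "lo \<le> c v \<and> c v \<le> hi" if "v \<in> V" for v
      using ub[OF that] lb[OF that] lo_lt hi_gt by linarith
    then have "c' \<in> K" unfolding K_iff S_def c'_def by auto
    then have "F cs \<le> F c'" by (rule csmin)
    also have "F c' = F c" unfolding F_def
    proof (rule sum.cong[OF refl])
      fix e assume "e \<in> E"
      then have "fst e \<in> V" "snd e \<in> V" using EV by auto
      then have "c' (fst e) = c (fst e)" "c' (snd e) = c (snd e)"
        unfolding c'_def b_def using cG by auto
      then show "c' (fst e) / c' (snd e) = c (fst e) / c (snd e)" by simp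
    qed
    finally show ?thesis .
  qed
  have crit: "Out cs u = In cs u" if u: "u \<in> V - G" for u
  proof (rule crit_alg[OF Out_pos[OF cspos u] In_pos[OF cspos u]])
    fix t :: real assume t: "t > 0"
    have "F cs \<le> F (cs(u := t * cs u))"
    proof (rule glob)
      fix v assume "v \<in> V" then show "(cs(u := t * cs u)) v > 0" using cspos t u by auto
    next
      fix v assume "v \<in> G" then show "(cs(u := t * cs u)) v = c0 v" using csG u by auto
    qed
    also have "\<dots> = F cs + (t - 1) * Out cs u + (1/t - 1) * In cs u"
      using F_scale[of cs u t, OF cspos _ t] u by blast
    finally show "0 \<le> (t - 1) * Out cs u + (1/t - 1) * In cs u" by simp
  qed
  show ?thesis using cspos csG crit by blast
qed

end


lemma smul_mul: fixes X Y :: "real^'n^'n"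
  shows "(a *\<^sub>R X) ** (b *\<^sub>R Y) = (a * b) *\<^sub>R (X ** Y)"
  by (simp add: matrix_scalar_ac scalar_matrix_assoc[symmetric])

lemma trace_scaleR: fixes X :: "real^'n^'n" shows "trace (k *\<^sub>R X) = k * trace X"
  by (simp add: trace_def sum_distrib_left)

lemma spd_inv:
  fixes X :: "real^'n^'n"
  assumes "spd X"
  shows "X ** matrix_inv X = mat 1" "matrix_inv X ** X = mat 1"
proof -
  obtain Q b where Q: "orthogonal_matrix Q" and bpos: "\<And>i. b$i > 0" and X: "X = Q ** dmat b ** transpose Q"
    using spd_decomp[OF assms] by blast
  define Y where "Y = Q ** dmat (\<chi> i. 1 / b$i) ** transpose Q"
  have e1: "(\<chi> i. b $ i * (\<chi> i. 1 / b$i) $ i) = (\<chi> i. (1::real))"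
    using bpos by (simp add: vec_eq_iff less_imp_neq[symmetric])
  have e2: "(\<chi> i. (\<chi> i. 1 / b$i) $ i * b $ i) = (\<chi> i. (1::real))"
    using bpos by (simp add: vec_eq_iff less_imp_neq[symmetric])
  have XY: "X ** Y = mat 1" unfolding X Y_def conj_mul[OF Q] e1 conj_one[OF Q] ..
  have YX: "Y ** X = mat 1" unfolding X Y_def conj_mul[OF Q] e2 conj_one[OF Q] ..
  have "matrix_inv X = Y" by (rule matrix_inv_unique[OF XY YX])
  then show "X ** matrix_inv X = mat 1" "matrix_inv X ** X = mat 1" using XY YX by simp_all
qed

lemma inv_scale:
  fixes X :: "real^'n^'n"
  assumes "spd X" "k \<noteq> 0"
  shows "matrix_inv (k *\<^sub>R X) = (1/k) *\<^sub>R matrix_inv X"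
  by (rule matrix_inv_unique) (use spd_inv[OF assms(1)] assms(2) in \<open>simp_all add: smul_mul\<close>)

lemma spd_scale:
  fixes X :: "real^'n^'n"
  assumes "spd X" "k > 0"
  shows "spd (k *\<^sub>R X)"
  using assms unfolding spd_def by (simp add: transpose_scalar scaleR_matrix_vector_assoc[symmetric])

lemma spd_id: "spd (mat 1 :: real^'n^'n)"
  unfolding spd_def by (simp add: transpose_mat)

lemma inv_id_scale: fixes c :: real shows "c \<noteq> 0 \<Longrightarrow> matrix_inv (c *\<^sub>R (mat 1 :: real^'n^'n)) = (1/c) *\<^sub>R mat 1"
  by (rule matrix_inv_unique) (simp_all add: smul_mul)

locale sol = dag V E G for V :: "'v set" and E and G +
  fixes c :: "'v \<Rightarrow> real" and z :: "'v \<Rightarrow> real^'n^'n"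
  assumes cpos: "\<And>v. v \<in> V \<Longrightarrow> c v > 0"
    and crit: "\<And>u. u \<in> V - G \<Longrightarrow> Out c u = In c u"
    and zc: "\<And>v. v \<in> G \<Longrightarrow> z v = c v *\<^sub>R mat 1"
begin

definition m :: "'v \<Rightarrow> real^'n^'n" where
  "m v = (if v \<in> V then c v *\<^sub>R mat 1 else 0)"

lemma m_in: "m \<in> PdV V G z"
  unfolding PdV_def m_def using cpos zc GV spd_scale[OF spd_id] by auto

lemma Phi_fst_snd: "Phi E x = (\<Sum>e\<in>E. trace (x (fst e) ** matrix_inv (x (snd e))))"
  unfolding Phi_def by (simp add: case_prod_beta)

lemma Phi_m: "Phi E m = (\<Sum>e\<in>E. c (fst e) / c (snd e) * real CARD('n))"
  unfolding Phi_fst_snd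
proof (rule sum.cong[OF refl])
  fix e assume e: "e \<in> E"
  then have V: "fst e \<in> V" "snd e \<in> V" using EV by auto
  then have cne: "c (snd e) \<noteq> 0" using cpos less_imp_neq by force
  show "trace (m (fst e) ** matrix_inv (m (snd e))) = c (fst e) / c (snd e) * real CARD('n)"
    unfolding m_def using V cne by (simp add: inv_id_scale smul_mul trace_scaleR trace_I)
qed

lemma main_ineq:
  assumes x: "x \<in> PdV V G z"
  shows "Phi E m \<le> Phi E x" and "Phi E x \<le> Phi E m \<Longrightarrow> x = m"
proof -
  define A where "A v = (1 / c v) *\<^sub>R x v" for v
  define l where "l v = ln (det (A v))" for v
  define r where "r e = c (fst e) / c (snd e)" for e :: "'v \<times> 'v"
  define d where "d = real CARD('n)"
  have xspd: "v \<in> V \<Longrightarrow> spd (x v)" for v using x unfolding PdV_def by blast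
  have xG: "v \<in> G \<Longrightarrow> x v = z v" for v using x unfolding PdV_def by blast
  have xout: "v \<notin> V \<Longrightarrow> x v = 0" for v using x unfolding PdV_def by blast
  have Aspd: "v \<in> V \<Longrightarrow> spd (A v)" for v unfolding A_def using xspd cpos by (simp add: spd_scale)
  have AG: "v \<in> G \<Longrightarrow> A v = mat 1" for v
  proof -
    assume v: "v \<in> G"
    then have "c v > 0" using cpos GV by blast
    then show "A v = mat 1" unfolding A_def using xG[OF v] zc[OF v] by simp
  qed
  have lG: "v \<in> G \<Longrightarrow> l v = 0" for v unfolding l_def using AG by simp
  have rpos: "e \<in> E \<Longrightarrow> r e > 0" for e unfolding r_def using EV cpos
    by (metis SigmaD1 SigmaD2 divide_pos_pos prod.collapse subsetD)
  have tm: "trace (x (fst e) ** matrix_inv (x (snd e))) = r e * trace (A (fst e) ** matrix_inv (A (snd e)))"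
    if e: "e \<in> E" for e
  proof -
    have V: "fst e \<in> V" "snd e \<in> V" using e EV by auto
    have c1: "c (fst e) > 0" "c (snd e) > 0" using V cpos by auto
    have "x (fst e) = c (fst e) *\<^sub>R A (fst e)" "x (snd e) = c (snd e) *\<^sub>R A (snd e)"
      unfolding A_def using c1 by simp_all
    then have "trace (x (fst e) ** matrix_inv (x (snd e)))
      = trace ((c (fst e) *\<^sub>R A (fst e)) ** ((1 / c (snd e)) *\<^sub>R matrix_inv (A (snd e))))"
      using inv_scale[OF Aspd[OF V(2)], of "c (snd e)"] c1 by simp
    also have "\<dots> = r e * trace (A (fst e) ** matrix_inv (A (snd e)))"
      unfolding smul_mul trace_scaleR r_def by simp
    finally show ?thesis .
  qed
  define D where "D e = r e * ((trace (A (fst e) ** matrix_inv (A (snd e))) - d) - (l (fst e) - l (snd e)))" for e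
  have Dnn: "e \<in> E \<Longrightarrow> D e \<ge> 0" for e
  proof -
    assume e: "e \<in> E"
    then have V: "fst e \<in> V" "snd e \<in> V" using EV by auto
    have "l (fst e) - l (snd e) \<le> trace (A (fst e) ** matrix_inv (A (snd e))) - d"
      unfolding l_def d_def by (rule keyK(1)[OF Aspd[OF V(1)] Aspd[OF V(2)]])
    then show "D e \<ge> 0" unfolding D_def using rpos[OF e] by simp
  qed
  have rz: "(\<Sum>e\<in>E. r e * (l (fst e) - l (snd e))) = 0"
    unfolding r_def by (rule rearr[OF crit lG])
  have diff: "Phi E x - Phi E m = (\<Sum>e\<in>E. D e)"
  proof -
    have "Phi E x - Phi E m = (\<Sum>e\<in>E. r e * (trace (A (fst e) ** matrix_inv (A (snd e))) - d))"
      unfolding Phi_m unfolding Phi_fst_snd sum_subtractf[symmetric] r_def[symmetric] d_def[symmetric]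
      by (rule sum.cong[OF refl]) (simp add: tm right_diff_distrib)
    also have "\<dots> = (\<Sum>e\<in>E. D e) + (\<Sum>e\<in>E. r e * (l (fst e) - l (snd e)))"
      unfolding D_def sum.distrib[symmetric] by (rule sum.cong[OF refl]) (simp add: algebra_simps)
    finally show ?thesis using rz by simp
  qed
  have "(\<Sum>e\<in>E. D e) \<ge> 0" using Dnn by (simp add: sum_nonneg)
  then show "Phi E m \<le> Phi E x" using diff by simp
  assume le: "Phi E x \<le> Phi E m"
  then have "(\<Sum>e\<in>E. D e) = 0" using diff \<open>(\<Sum>e\<in>E. D e) \<ge> 0\<close> by simp
  then have D0: "\<forall>e\<in>E. D e = 0" using Dnn finE by (simp add: sum_nonneg_eq_0_iff)
  have Aeq: "A v = A w" if e: "(v, w) \<in> E" for v w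
  proof -
    have V: "v \<in> V" "w \<in> V" using e EV by auto
    have "D (v, w) = 0" using D0 e by blast
    then have "trace (A v ** matrix_inv (A w)) - d \<le> l v - l w"
      unfolding D_def using rpos[OF e] by simp
    then show ?thesis unfolding l_def d_def by (rule keyK(2)[OF Aspd[OF V(1)] Aspd[OF V(2)]])
  qed
  have AV: "v \<in> V \<Longrightarrow> A v = mat 1" for v by (rule propagate[OF Aeq AG])
  show "x = m"
  proof
    fix v show "x v = m v"
    proof (cases "v \<in> V")
      case True
      then have "c v > 0" using cpos by blast
      moreover have "x v = c v *\<^sub>R A v" unfolding A_def using \<open>c v > 0\<close> by simp
      ultimately show ?thesis using AV[OF True] True unfolding m_def by simp
    next
      case False then show ?thesis using xout unfolding m_def by simp
    qed
  qed
qed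

end


lemma madd_r: fixes A B C :: "real^'n^'n" shows "(A + B) ** C = A ** C + B ** C"
  by (simp add: matrix_matrix_mult_def vec_eq_iff sum.distrib distrib_right)
lemma msub_r: fixes A B C :: "real^'n^'n" shows "(A - B) ** C = A ** C - B ** C"
  by (simp add: matrix_matrix_mult_def vec_eq_iff sum_subtractf left_diff_distrib)
lemma msub_l: fixes A B C :: "real^'n^'n" shows "A ** (B - C) = A ** B - A ** C"
  by (simp add: matrix_matrix_mult_def vec_eq_iff sum_subtractf right_diff_distrib)

lemma dmat_add: "dmat a + dmat b = dmat (\<chi> i. a$i + b$i)"
  by (simp add: vec_eq_iff)
lemma dmat_scale: "k *\<^sub>R dmat a = dmat (\<chi> i. k * a$i)"
  by (simp add: vec_eq_iff)

lemma conj_add: fixes Q :: "real^'n^'n" shows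
  "Q ** dmat a ** transpose Q + Q ** dmat b ** transpose Q = Q ** dmat (\<chi> i. a$i + b$i) ** transpose Q"
  by (simp only: dmat_add[symmetric] matrix_add_ldistrib madd_r)

lemma conj_scale: fixes Q :: "real^'n^'n" shows
  "k *\<^sub>R (Q ** dmat a ** transpose Q) = Q ** dmat (\<chi> i. k * a$i) ** transpose Q"
  by (simp add: scalar_matrix_assoc matrix_scalar_ac dmat_scale[symmetric])

lemma conj_const: fixes Q :: "real^'n^'n" assumes "orthogonal_matrix Q"
  shows "k *\<^sub>R mat 1 = Q ** dmat (\<chi> i. k) ** transpose Q"
  using conj_one[OF assms] conj_scale[of k Q "\<chi> i. 1"] by simp

lemma conj_inv: fixes Q :: "real^'n^'n" assumes Q: "orthogonal_matrix Q" and a: "\<And>i. a$i \<noteq> 0"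
  shows "matrix_inv (Q ** dmat a ** transpose Q) = Q ** dmat (\<chi> i. 1 / a$i) ** transpose Q"
proof (rule matrix_inv_unique)
  have e1: "(\<chi> i. a $ i * (\<chi> i. 1 / a$i) $ i) = (\<chi> i. (1::real))"
    using a by (simp add: vec_eq_iff)
  have e2: "(\<chi> i. (\<chi> i. 1 / a$i) $ i * a $ i) = (\<chi> i. (1::real))"
    using a by (simp add: vec_eq_iff)
  show "Q ** dmat a ** transpose Q ** (Q ** dmat (\<chi> i. 1 / a$i) ** transpose Q) = mat 1"
    unfolding conj_mul[OF Q] e1 conj_one[OF Q] ..
  show "Q ** dmat (\<chi> i. 1 / a$i) ** transpose Q ** (Q ** dmat a ** transpose Q) = mat 1"
    unfolding conj_mul[OF Q] e2 conj_one[OF Q] ..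
qed

lemma trace_mul_dmat: fixes X :: "real^'n^'n" shows "trace (X ** dmat d) = (\<Sum>i\<in>UNIV. X$i$i * d$i)"
  by (simp add: trace_def)

lemma trace_sq_sym: fixes X :: "real^'n^'n" assumes "transpose X = X"
  shows "trace (X ** X) = (\<Sum>i\<in>UNIV. \<Sum>k\<in>UNIV. (X$i$k)^2)"
proof -
  have s: "X$k$i = X$i$k" for i k using assms by (metis transpose_def vec_lambda_beta)
  show ?thesis unfolding trace_def matrix_matrix_mult_def
    by (simp add: s power2_eq_square)
qed

lemma trace_sq_nonneg: fixes X :: "real^'n^'n" assumes "transpose X = X"
  shows "trace (X ** X) \<ge> 0"
  unfolding trace_sq_sym[OF assms] by (intro sum_nonneg) simp

lemma trace_sq_zero: fixes X :: "real^'n^'n" assumes "transpose X = X" "trace (X ** X) = 0"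
  shows "X = 0"
proof -
  have "\<forall>i\<in>UNIV. (\<Sum>k\<in>UNIV. (X$i$k)^2) = 0"
    using assms(2) unfolding trace_sq_sym[OF assms(1)]
    by (subst sum_nonneg_eq_0_iff[symmetric]) (auto intro: sum_nonneg)
  then have "\<forall>i k. (X$i$k)^2 = 0"
    by (metis (no_types, lifting) UNIV_I finite sum_nonneg_eq_0_iff zero_le_power2)
  then show ?thesis by (simp add: vec_eq_iff)
qed

lemma d1:
  fixes al a be mu :: real
  assumes "be + s * mu \<noteq> 0"
  shows "((\<lambda>s. (al + s * a) / (be + s * mu)) has_real_derivative (a * be - al * mu) / (be + s * mu)^2) (at s)"
proof -
  have "((\<lambda>s. (al + s * a) / (be + s * mu)) has_real_derivative
        ((0 + 1 * a) * (be + s * mu) - (al + s * a) * (0 + 1 * mu)) / ((be + s * mu) * (be + s * mu))) (at s)"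
    by (intro DERIV_divide DERIV_add DERIV_cmult_right DERIV_const DERIV_ident assms)
  moreover have "((0 + 1 * a) * (be + s * mu) - (al + s * a) * (0 + 1 * mu)) / ((be + s * mu) * (be + s * mu))
      = (a * be - al * mu) / (be + s * mu)^2"
    by (simp add: power2_eq_square algebra_simps)
  ultimately show ?thesis by simp
qed

lemma d2:
  fixes al a be mu :: real
  assumes "be \<noteq> 0"
  shows "((\<lambda>s. (a * be - al * mu) / (be + s * mu)^2) has_real_derivative (- 2 * mu * (a * be - al * mu) / be^3)) (at 0)"
proof -
  have p: "((\<lambda>x. (be + x * mu)^2) has_real_derivative (of_nat 2 * ((0 + 1 * mu) * (be + 0 * mu) ^ (2 - Suc 0)))) (at 0)"
    by (intro DERIV_power DERIV_add DERIV_const DERIV_cmult_right DERIV_ident)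
  have "((\<lambda>s. (a * be - al * mu) / (be + s * mu)^2) has_real_derivative
       (0 * (be + 0 * mu)^2 - (a * be - al * mu) * (of_nat 2 * ((0 + 1 * mu) * (be + 0 * mu) ^ (2 - Suc 0))))
         / ((be + 0 * mu)^2 * (be + 0 * mu)^2)) (at 0)"
    by (rule DERIV_divide[OF DERIV_const p]) (use assms in simp)
  moreover have "(0 * (be + 0 * mu)^2 - (a * be - al * mu) * (of_nat 2 * ((0 + 1 * mu) * (be + 0 * mu) ^ (2 - Suc 0))))
         / ((be + 0 * mu)^2 * (be + 0 * mu)^2) = - 2 * mu * (a * be - al * mu) / be^3"
    using assms by (simp add: power2_eq_square power3_eq_cube field_simps)
  ultimately show ?thesis by simp
qed


lemma transpose_diff': fixes A B :: "real^'n^'n" shows "transpose (A - B) = transpose A - transpose B"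
  by (simp add: transpose_def vec_eq_iff)

context sol begin

lemma hessian:
  fixes H :: "'v \<Rightarrow> real^'n^'n"
  assumes Hs: "\<forall>v. symm (H v)" and H0: "\<forall>v. v \<notin> V - G \<longrightarrow> H v = 0" and Hn: "H \<noteq> (\<lambda>v. 0)"
  shows "\<exists>q>0. second_dir_deriv (Phi E) m H q"
proof -
  have symH: "transpose (H v) = H v" for v using Hs unfolding symm_def by blast
  have "\<forall>w. \<exists>p. orthogonal_matrix (fst p) \<and> H w = fst p ** dmat (snd p) ** transpose (fst p)"
    using spectral[OF symH] by auto
  then obtain QP where QP: "\<And>w. orthogonal_matrix (fst (QP w)) \<and> H w = fst (QP w) ** dmat (snd (QP w)) ** transpose (fst (QP w))"
    using choice by metis
  define Q where "Q w = fst (QP w)" for w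
  define mu where "mu w = snd (QP w)" for w
  have oQ: "orthogonal_matrix (Q w)" for w using QP unfolding Q_def by blast
  have HQ: "H w = Q w ** dmat (mu w) ** transpose (Q w)" for w using QP unfolding Q_def mu_def by blast
  define Mu where "Mu w = (\<Sum>i\<in>UNIV. \<bar>mu w $ i\<bar>)" for w
  define del where "del = Min (insert 1 ((\<lambda>w. c w / (1 + Mu w)) ` V))"
  have Mu0: "Mu w \<ge> 0" for w unfolding Mu_def by (simp add: sum_nonneg)
  have del0: "del > 0" unfolding del_def using finV cpos Mu0
    by (subst Min_gr_iff) (auto intro!: divide_pos_pos add_pos_nonneg)
  have small: "c w + s * mu w $ i > 0" if w: "w \<in> V" and s: "\<bar>s\<bar> < del" for w s i
  proof -
    have "del \<le> c w / (1 + Mu w)" unfolding del_def using finV w by (intro Min_le) auto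
    then have "del * (1 + Mu w) \<le> c w" using Mu0[of w] by (simp add: le_divide_eq)
    moreover have "\<bar>s\<bar> * (1 + Mu w) < del * (1 + Mu w)"
      using s Mu0[of w] by (intro mult_strict_right_mono) auto
    ultimately have "\<bar>s\<bar> * (1 + Mu w) < c w" by simp
    moreover have "\<bar>mu w $ i\<bar> \<le> Mu w" unfolding Mu_def by (rule member_le_sum) auto
    then have "\<bar>s * mu w $ i\<bar> \<le> \<bar>s\<bar> * (1 + Mu w)" by (simp add: abs_mult mult_left_mono)
    ultimately show ?thesis by linarith
  qed
  define a where "a e i = (transpose (Q (snd e)) ** H (fst e) ** Q (snd e)) $ i $ i" for e :: "'v \<times> 'v" and i
  define Gf where "Gf s = (\<Sum>e\<in>E. \<Sum>i\<in>UNIV. (c (fst e) + s * a e i) / (c (snd e) + s * mu (snd e) $ i))" for s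
  define g where "g s = Phi E (\<lambda>v. m v + s *\<^sub>R H v)" for s
  have eqG: "g s = Gf s" if s: "s \<in> ball 0 del" for s
    unfolding g_def Gf_def Phi_fst_snd
  proof (rule sum.cong[OF refl])
    fix e assume e: "e \<in> E"
    define v where "v = fst e"
    define w where "w = snd e"
    have V: "v \<in> V" "w \<in> V" using e EV unfolding v_def w_def by auto
    have sd: "\<bar>s\<bar> < del" using s by (simp add: dist_norm)
    have pw: "c w + s * mu w $ i \<noteq> 0" for i using small[OF V(2) sd, of i] by simp
    have mw: "m w + s *\<^sub>R H w = Q w ** dmat (\<chi> i. c w + s * mu w $ i) ** transpose (Q w)"
    proof -
      have "m w + s *\<^sub>R H w = Q w ** dmat (\<chi> i. c w) ** transpose (Q w) + Q w ** dmat (\<chi> i. s * mu w $ i) ** transpose (Q w)"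
        unfolding m_def using V conj_const[OF oQ, of "c w" w] conj_scale[of s "Q w" "mu w"] HQ[of w] by simp
      also have "\<dots> = Q w ** dmat (\<chi> i. c w + s * mu w $ i) ** transpose (Q w)"
        by (simp add: conj_add)
      finally show ?thesis .
    qed
    have inv: "matrix_inv (m w + s *\<^sub>R H w) = Q w ** dmat (\<chi> i. 1 / (c w + s * mu w $ i)) ** transpose (Q w)"
      unfolding mw by (subst conj_inv[OF oQ]) (simp_all add: pw)
    define X where "X = m v + s *\<^sub>R H v"
    define Di where "Di = dmat (\<chi> i. 1 / (c w + s * mu w $ i))"
    have QXQ: "transpose (Q w) ** X ** Q w = c v *\<^sub>R mat 1 + s *\<^sub>R (transpose (Q w) ** H v ** Q w)"
    proof -
      have "transpose (Q w) ** X ** Q w = c v *\<^sub>R (transpose (Q w) ** Q w) + s *\<^sub>R (transpose (Q w) ** H v ** Q w)"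
        unfolding X_def m_def using V
        by (simp add: matrix_add_ldistrib madd_r matrix_scalar_ac scalar_matrix_assoc[symmetric])
      then show ?thesis using orthT(1)[OF oQ] by simp
    qed
    have "trace (X ** (Q w ** Di ** transpose (Q w))) = trace ((X ** Q w ** Di) ** transpose (Q w))"
      by (simp add: matrix_mul_assoc)
    also have "\<dots> = trace (transpose (Q w) ** (X ** Q w ** Di))" by (rule trace_mul_sym)
    also have "\<dots> = trace ((transpose (Q w) ** X ** Q w) ** Di)" by (simp add: matrix_mul_assoc)
    also have "\<dots> = (\<Sum>i\<in>UNIV. (c v + s * a e i) / (c w + s * mu w $ i))"
      unfolding Di_def trace_mul_dmat QXQ a_def w_def[symmetric] v_def[symmetric] by (simp add: mat_def)
    finally show "trace ((m (fst e) + s *\<^sub>R H (fst e)) ** matrix_inv (m (snd e) + s *\<^sub>R H (snd e)))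
        = (\<Sum>i\<in>UNIV. (c (fst e) + s * a e i) / (c (snd e) + s * mu (snd e) $ i))"
      using inv unfolding X_def Di_def v_def w_def by simp
  qed
  define G1 where "G1 t = (\<Sum>e\<in>E. \<Sum>i\<in>UNIV. (a e i * c (snd e) - c (fst e) * mu (snd e) $ i) / (c (snd e) + t * mu (snd e) $ i)^2)" for t
  define q where "q = (\<Sum>e\<in>E. \<Sum>i\<in>UNIV. - 2 * mu (snd e) $ i * (a e i * c (snd e) - c (fst e) * mu (snd e) $ i) / c (snd e)^3)"
  have dG: "(Gf has_real_derivative G1 t) (at t)" if t: "t \<in> ball 0 del" for t
    unfolding Gf_def G1_def
  proof (intro DERIV_sum d1)
    fix e i assume e: "e \<in> E"
    have "snd e \<in> V" using e EV by auto
    then show "c (snd e) + t * mu (snd e) $ i \<noteq> 0" using small[of "snd e" t i] t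
      by (simp add: dist_norm less_imp_neq[symmetric])
  qed
  have dg: "(g has_real_derivative G1 t) (at t)" if t: "t \<in> ball 0 del" for t
    by (rule has_field_derivative_transform_within_open[OF dG[OF t] open_ball t]) (simp add: eqG)
  have dG1: "(G1 has_real_derivative q) (at 0)"
    unfolding G1_def q_def
  proof (intro DERIV_sum d2)
    fix e assume e: "e \<in> E"
    have "snd e \<in> V" using e EV by auto
    then show "c (snd e) \<noteq> 0" using cpos less_imp_neq by force
  qed
  have derg: "deriv g t = G1 t" if "t \<in> ball 0 del" for t by (rule DERIV_imp_deriv[OF dg[OF that]])
  have sdd: "second_dir_deriv (Phi E) m H q"
    unfolding second_dir_deriv_def g_def[symmetric]
  proof
    show "\<forall>\<^sub>F t in nhds 0. g differentiable at t"
      unfolding eventually_nhds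
      by (rule exI[of _ "ball 0 del"]) (use del0 dg in \<open>auto simp: real_differentiable_def intro!: exI\<close>)
    show "((\<lambda>t. deriv g t) has_real_derivative q) (at 0)"
    proof (rule has_field_derivative_transform_within_open[OF dG1 open_ball[of 0 del]])
      show "0 \<in> ball 0 del" using del0 by simp
      fix t assume "t \<in> ball (0::real) del"
      then show "G1 t = deriv g t" using derg by simp
    qed
  qed
  define r where "r e = c (fst e) / c (snd e)" for e :: "'v \<times> 'v"
  define T where "T e = trace (H (fst e) ** H (fst e))" for e :: "'v \<times> 'v"
  define phi where "phi u = trace (H u ** H u) / (c u)^2" for u
  define D where "D e = (1 / c (fst e)) *\<^sub>R H (fst e) - (1 / c (snd e)) *\<^sub>R H (snd e)" for e :: "'v \<times> 'v"
  have symD: "transpose (D e) = D e" for e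
    unfolding D_def by (simp add: transpose_scalar symH transpose_diff')
  have qe: "(\<Sum>i\<in>UNIV. - 2 * mu (snd e) $ i * (a e i * c (snd e) - c (fst e) * mu (snd e) $ i) / c (snd e)^3)
      = r e * trace (D e ** D e) - r e * (phi (fst e) - phi (snd e))" if e: "e \<in> E" for e
  proof -
    define v where "v = fst e"
    define w where "w = snd e"
    have V: "v \<in> V" "w \<in> V" using e EV unfolding v_def w_def by auto
    define al where "al = c v"
    define be where "be = c w"
    have al: "al > 0" and be: "be > 0" using cpos V unfolding al_def be_def by auto
    define tvv where "tvv = trace (H v ** H v)"
    define tvw where "tvw = trace (H v ** H w)"
    define tww where "tww = trace (H w ** H w)"
    have mu2: "(\<Sum>i\<in>UNIV. mu w $ i * mu w $ i) = tww"
    proof -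
      have "H w ** H w = Q w ** dmat (\<chi> i. mu w $ i * mu w $ i) ** transpose (Q w)"
        unfolding HQ[of w] by (rule conj_mul[OF oQ])
      then show ?thesis unfolding tww_def using trace_conj[OF oQ] by simp
    qed
    have amu: "(\<Sum>i\<in>UNIV. a e i * mu w $ i) = tvw"
    proof -
      have "(\<Sum>i\<in>UNIV. a e i * mu w $ i) = trace ((transpose (Q w) ** H v ** Q w) ** dmat (mu w))"
        unfolding trace_mul_dmat a_def v_def w_def ..
      also have "\<dots> = trace (transpose (Q w) ** (H v ** Q w ** dmat (mu w)))"
        by (simp add: matrix_mul_assoc)
      also have "\<dots> = trace ((H v ** Q w ** dmat (mu w)) ** transpose (Q w))"
        by (rule trace_mul_sym)
      also have "\<dots> = trace (H v ** (Q w ** dmat (mu w) ** transpose (Q w)))"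
        by (simp add: matrix_mul_assoc)
      finally show ?thesis unfolding tvw_def HQ[of w, symmetric] .
    qed
    have lhs: "(\<Sum>i\<in>UNIV. - 2 * mu w $ i * (a e i * be - al * mu w $ i) / be^3)
        = 2 * al / be^3 * tww - 2 / be^2 * tvw"
    proof -
      have "(\<Sum>i\<in>UNIV. - 2 * mu w $ i * (a e i * be - al * mu w $ i) / be^3)
          = (\<Sum>i\<in>UNIV. 2 * al / be^3 * (mu w $ i * mu w $ i) - 2 / be^2 * (a e i * mu w $ i))"
        using be by (intro sum.cong refl) (simp add: field_simps power3_eq_cube power2_eq_square)
      also have "\<dots> = 2 * al / be^3 * tww - 2 / be^2 * tvw"
        unfolding sum_subtractf sum_distrib_left[symmetric] mu2 amu ..
      finally show ?thesis .
    qed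
    have twv: "trace (H w ** H v) = tvw" unfolding tvw_def by (rule trace_mul_sym)
    have tD: "trace (D e ** D e) = tvv / al^2 - 2 * tvw / (al * be) + tww / be^2"
    proof -
      have "D e ** D e = ((1/al) * (1/al)) *\<^sub>R (H v ** H v) - ((1/be) * (1/al)) *\<^sub>R (H w ** H v)
          - (((1/al) * (1/be)) *\<^sub>R (H v ** H w) - ((1/be) * (1/be)) *\<^sub>R (H w ** H w))"
        unfolding D_def v_def[symmetric] w_def[symmetric] al_def be_def msub_r msub_l smul_mul ..
      then have "trace (D e ** D e) = trace (((1/al) * (1/al)) *\<^sub>R (H v ** H v) - ((1/be) * (1/al)) *\<^sub>R (H w ** H v)
          - (((1/al) * (1/be)) *\<^sub>R (H v ** H w) - ((1/be) * (1/be)) *\<^sub>R (H w ** H w)))" by simp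
      also have "\<dots> = (1/al) * (1/al) * tvv - (1/be) * (1/al) * tvw - ((1/al) * (1/be) * tvw - (1/be) * (1/be) * tww)"
        by (simp only: trace_sub trace_scaleR tvv_def tww_def tvw_def twv[unfolded tvw_def])
      also have "\<dots> = tvv / al^2 - 2 * tvw / (al * be) + tww / be^2"
        using al be by (simp add: field_simps power2_eq_square)
      finally show ?thesis .
    qed
    have "2 * al / be^3 * tww - 2 / be^2 * tvw = al / be * (tvv / al^2 - 2 * tvw / (al * be) + tww / be^2)
        - al / be * (tvv / al^2 - tww / be^2)"
      using al be by (simp add: field_simps power2_eq_square power3_eq_cube)
    then show ?thesis using lhs tD
      unfolding r_def phi_def v_def[symmetric] w_def[symmetric] al_def[symmetric] be_def[symmetric] tvv_def tww_def
      by simp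
  qed
  have phiG: "u \<in> G \<Longrightarrow> phi u = 0" for u unfolding phi_def using H0 by (simp add: trace_def)
  have rz: "(\<Sum>e\<in>E. r e * (phi (fst e) - phi (snd e))) = 0"
    unfolding r_def by (rule rearr[OF crit phiG])
  have qsum: "q = (\<Sum>e\<in>E. r e * trace (D e ** D e))"
  proof -
    have "q = (\<Sum>e\<in>E. r e * trace (D e ** D e) - r e * (phi (fst e) - phi (snd e)))"
      unfolding q_def by (rule sum.cong[OF refl]) (rule qe)
    also have "\<dots> = (\<Sum>e\<in>E. r e * trace (D e ** D e))" using rz by (simp add: sum_subtractf)
    finally show ?thesis .
  qed
  have rpos: "e \<in> E \<Longrightarrow> r e > 0" for e unfolding r_def using EV cpos
    by (metis SigmaD1 SigmaD2 divide_pos_pos prod.collapse subsetD)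
  have nn: "e \<in> E \<Longrightarrow> r e * trace (D e ** D e) \<ge> 0" for e
    using rpos trace_sq_nonneg[OF symD] by (simp add: less_imp_le)
  have qpos: "q > 0"
  proof (rule ccontr)
    assume "\<not> q > 0"
    then have "(\<Sum>e\<in>E. r e * trace (D e ** D e)) = 0" using qsum nn by (simp add: sum_nonneg order_antisym)
    then have z: "\<forall>e\<in>E. r e * trace (D e ** D e) = 0" using nn finE by (simp add: sum_nonneg_eq_0_iff)
    have Deq: "(1 / c v) *\<^sub>R H v = (1 / c w) *\<^sub>R H w" if e: "(v, w) \<in> E" for v w
    proof -
      have "trace (D (v, w) ** D (v, w)) = 0" using z e rpos[OF e] by auto
      then have "D (v, w) = 0" by (rule trace_sq_zero[OF symD])
      then show ?thesis unfolding D_def by simp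
    qed
    have HG: "v \<in> G \<Longrightarrow> (1 / c v) *\<^sub>R H v = 0" for v using H0 by simp
    have HV: "v \<in> V \<Longrightarrow> (1 / c v) *\<^sub>R H v = 0" for v by (rule propagate[OF Deq HG])
    have "H = (\<lambda>v. 0)"
    proof
      fix v show "H v = 0"
      proof (cases "v \<in> V")
        case True
        then show ?thesis using HV[OF True] cpos[OF True] by simp
      next
        case False then show ?thesis using H0 by simp
      qed
    qed
    then show False using Hn by simp
  qed
  show ?thesis using qpos sdd by blast
qed

end

theorem mainTheorem18:
  fixes V :: "'v set" and E :: "('v \<times> 'v) set" and \<Gamma> :: "'v set"
    and z :: "'v \<Rightarrow> real^'n^'n"
  assumes "finite V" and "E \<subseteq> V \<times> V" and "acyclic E"
    and "\<Gamma> \<subseteq> V" and "sinks V E \<subseteq> \<Gamma>" and "sources V E \<subseteq> \<Gamma>"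
    and "V - \<Gamma> \<noteq> {}"
    and "\<forall>v\<in>\<Gamma>. \<exists>c>0. z v = c *\<^sub>R mat 1"
  shows "\<exists>m \<in> PdV V \<Gamma> z.
           (\<forall>x \<in> PdV V \<Gamma> z. Phi E m \<le> Phi E x) \<and>
           (\<forall>x \<in> PdV V \<Gamma> z. Phi E x \<le> Phi E m \<longrightarrow> x = m) \<and>
           (\<forall>H. (\<forall>v. symm (H v)) \<and> (\<forall>v. v \<notin> V - \<Gamma> \<longrightarrow> H v = 0) \<and> H \<noteq> (\<lambda>v. 0)
                 \<longrightarrow> (\<exists>q>0. second_dir_deriv (Phi E) m H q)) \<and>
           (\<forall>v\<in>V. \<exists>c>0. m v = c *\<^sub>R mat 1)"
proof -
  note a = assms
  define c0 where "c0 v = (SOME c. c > 0 \<and> z v = c *\<^sub>R mat 1)" for v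
  have c0: "c0 v > 0 \<and> z v = c0 v *\<^sub>R mat 1" if v: "v \<in> \<Gamma>" for v
  proof -
    have "\<exists>c. c > 0 \<and> z v = c *\<^sub>R mat 1" using a(8) v by blast
    then show ?thesis unfolding c0_def by (rule someI_ex)
  qed
  interpret dag V E \<Gamma>
    by unfold_locales (use a in auto)
  obtain c where c: "\<forall>v\<in>V. c v > 0" "\<forall>v\<in>\<Gamma>. c v = c0 v" "\<forall>u\<in>V-\<Gamma>. Out c u = In c u"
    using scalar_exists[of c0] c0 by blast
  interpret S: sol V E \<Gamma> c z
  proof unfold_locales
    show "\<And>v. v \<in> V \<Longrightarrow> c v > 0" using c(1) by blast
    show "\<And>u. u \<in> V - \<Gamma> \<Longrightarrow> Out c u = In c u" using c(3) by blast
    show "\<And>v. v \<in> \<Gamma> \<Longrightarrow> z v = c v *\<^sub>R mat 1" using c(2) c0 by simp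
  qed
  have m1: "\<forall>x \<in> PdV V \<Gamma> z. Phi E S.m \<le> Phi E x" using S.main_ineq(1) by blast
  have m2: "\<forall>x \<in> PdV V \<Gamma> z. Phi E x \<le> Phi E S.m \<longrightarrow> x = S.m" using S.main_ineq(2) by blast
  have m3: "\<forall>H. (\<forall>v. symm (H v)) \<and> (\<forall>v. v \<notin> V - \<Gamma> \<longrightarrow> H v = 0) \<and> H \<noteq> (\<lambda>v. 0)
                 \<longrightarrow> (\<exists>q>0. second_dir_deriv (Phi E) S.m H q)" using S.hessian by blast
  have m4: "\<forall>v\<in>V. \<exists>c>0. S.m v = c *\<^sub>R mat 1" using c(1) unfolding S.m_def by auto
  show ?thesis using S.m_in m1 m2 m3 m4 by blast
qed

end
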